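(* Let $k\ge 2$ be an even integer. In the maximum-cardinality online bipartite matching problem under vertex arrivals with a hard budget of $k$ reassignments per arrival (defined in the context), the shortest-augmenting-path algorithm described in the context is $(1-\frac{2}{k+2})$-competitive: on every instance, the matching it outputs has cardinality at least $(1-\frac{2}{k+2})\cdot\mathsf{OPT}$, where $\mathsf{OPT}$ is the maximum cardinality of a matching in the revealed graph.
   Context: Problem: There is a bipartite graph $G=(L\cup R,E)$. The algorithm initially knows only $R$ and the budget $k$. Over $|L|$ timesteps, the vertices of $L$ arrive one at a time; when a vertex arrives, all its incident edges are revealed. At the end of each timestep the algorithm must output a matching in the graph revealed so far. The new matching $M_2$ must be obtainable from the previous matching $M_1$ (the empty matching before the first timestep) by at most $k$ (re)assignments, where the number of (re)assignments is the number of vertices having nonzero degree in $M_1\triangle M_2$ (each vertex whose partner changes counts once). Moreover, once a vertex is matched it must remain matched at all later timesteps. A matching's size is its number of edges. Given a matching $M$, a vertex is exposed if no edge of $M$ is incident to it; an augmenting path with respect to $M$ is a path between two distinct exposed vertices whose edges alternate between edges not in $M$ and edges in $M$; its length is its number of edges. Algorithm: when a vertex $u$ arrives, among all augmenting paths in the current graph with respect to the current matching $M$ that contain $u$, choose a shortest one $P$; if no such path exists or its length exceeds $k-1$, keep $M$; otherwise output $M\triangle P$. *)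

theory Defs
  imports Complex_Main
begin

text \<open>Graphs are sets of undirected edges, each edge a two-element set of vertices.\<close>

definition is_matching :: "'a set set \<Rightarrow> 'a set set \<Rightarrow> bool" where
  "is_matching G M \<longleftrightarrow> M \<subseteq> G \<and> (\<forall>e1\<in>M. \<forall>e2\<in>M. e1 \<noteq> e2 \<longrightarrow> e1 \<inter> e2 = {})"

definition exposed :: "'a set set \<Rightarrow> 'a \<Rightarrow> bool" where
  "exposed M v \<longleftrightarrow> (\<forall>e\<in>M. v \<notin> e)"

definition path_edge :: "'a list \<Rightarrow> nat \<Rightarrow> 'a set" where
  "path_edge ps i = {ps ! i, ps ! Suc i}"

definition path_edges :: "'a list \<Rightarrow> 'a set set" where
  "path_edges ps = {path_edge ps i | i. Suc i < length ps}"

definition is_path :: "'a set set \<Rightarrow> 'a list \<Rightarrow> bool" where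
  "is_path G ps \<longleftrightarrow> ps \<noteq> [] \<and> distinct ps \<and> (\<forall>i. Suc i < length ps \<longrightarrow> path_edge ps i \<in> G)"

definition path_length :: "'a list \<Rightarrow> nat" where
  "path_length ps = length ps - 1"

definition augmenting_path :: "'a set set \<Rightarrow> 'a set set \<Rightarrow> 'a list \<Rightarrow> bool" where
  "augmenting_path G M ps \<longleftrightarrow>
     is_path G ps \<and> length ps \<ge> 2 \<and> hd ps \<noteq> last ps \<and>
     exposed M (hd ps) \<and> exposed M (last ps) \<and>
     (\<forall>i. Suc (Suc i) < length ps \<longrightarrow>
        (path_edge ps i \<in> M \<longleftrightarrow> path_edge ps (Suc i) \<notin> M))"

definition symdiff :: "'b set \<Rightarrow> 'b set \<Rightarrow> 'b set" where
  "symdiff A B = (A - B) \<union> (B - A)"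

text \<open>One step of the shortest-augmenting-path algorithm, on the revealed graph G,
  when vertex u arrives, with budget k (nondeterministic choice among shortest paths).\<close>

definition alg_step :: "nat \<Rightarrow> 'a set set \<Rightarrow> 'a \<Rightarrow> 'a set set \<Rightarrow> 'a set set \<Rightarrow> bool" where
  "alg_step k G u M M' \<longleftrightarrow>
     ((\<not> (\<exists>P. augmenting_path G M P \<and> u \<in> set P \<and> path_length P \<le> k - 1)) \<and> M' = M)
   \<or> (\<exists>P. augmenting_path G M P \<and> u \<in> set P \<and>
          (\<forall>Q. augmenting_path G M Q \<and> u \<in> set Q \<longrightarrow> path_length P \<le> path_length Q) \<and>
          path_length P \<le> k - 1 \<and> M' = symdiff M (path_edges P))"

text \<open>Bipartite instance: arrival order Ls of the vertices of L, offline side R, edge set E.\<close>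

definition bip_instance :: "'a list \<Rightarrow> 'a set \<Rightarrow> 'a set set \<Rightarrow> bool" where
  "bip_instance Ls R E \<longleftrightarrow> distinct Ls \<and> finite R \<and> set Ls \<inter> R = {} \<and>
     (\<forall>e\<in>E. \<exists>l r. e = {l, r} \<and> l \<in> set Ls \<and> r \<in> R)"

definition revealed :: "'a list \<Rightarrow> 'a set set \<Rightarrow> nat \<Rightarrow> 'a set set" where
  "revealed Ls E t = {e \<in> E. \<exists>l \<in> set (take t Ls). l \<in> e}"

definition alg_run :: "nat \<Rightarrow> 'a list \<Rightarrow> 'a set set \<Rightarrow> (nat \<Rightarrow> 'a set set) \<Rightarrow> bool" where
  "alg_run k Ls E Ms \<longleftrightarrow> Ms 0 = {} \<and>
     (\<forall>i < length Ls. alg_step k (revealed Ls E (Suc i)) (Ls ! i) (Ms i) (Ms (Suc i)))"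

definition OPT :: "'a set set \<Rightarrow> nat" where
  "OPT G = Max {card M | M. is_matching G M}"

end

theory Submission
  imports Defs
begin
definition mat :: "'a set set \<Rightarrow> bool" where
  "mat X \<longleftrightarrow> (\<forall>e1\<in>X. \<forall>e2\<in>X. e1 \<noteq> e2 \<longrightarrow> e1 \<inter> e2 = {})"

definition simple :: "'a set set \<Rightarrow> bool" where
  "simple G \<longleftrightarrow> (\<forall>e\<in>G. \<exists>x y. x \<noteq> y \<and> e = {x,y})"

definition alt :: "'a set set \<Rightarrow> 'a set set \<Rightarrow> 'a list \<Rightarrow> bool" where
  "alt A B ps \<longleftrightarrow> distinct ps \<and> length ps \<ge> 2 \<and>
     (\<forall>i. Suc i < length ps \<longrightarrow> path_edge ps i \<in> (if even i then B else A))"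

definition evenE :: "'a list \<Rightarrow> 'a set set" where
  "evenE ps = (\<lambda>i. path_edge ps i) ` {i. Suc i < length ps \<and> even i}"

definition oddE :: "'a list \<Rightarrow> 'a set set" where
  "oddE ps = (\<lambda>i. path_edge ps i) ` {i. Suc i < length ps \<and> odd i}"

lemma mat_sub: "mat X \<Longrightarrow> Y \<subseteq> X \<Longrightarrow> mat Y"
  unfolding mat_def by blast

lemma mat_eq: "mat X \<Longrightarrow> e1 \<in> X \<Longrightarrow> e2 \<in> X \<Longrightarrow> x \<in> e1 \<Longrightarrow> x \<in> e2 \<Longrightarrow> e1 = e2"
  unfolding mat_def by blast

lemma is_matching_mat: "is_matching G M \<longleftrightarrow> M \<subseteq> G \<and> mat M"
  unfolding is_matching_def mat_def by blast

lemma simple_sub: "simple X \<Longrightarrow> Y \<subseteq> X \<Longrightarrow> simple Y"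
  unfolding simple_def by blast

lemma path_edges_image: "path_edges ps = (\<lambda>i. path_edge ps i) ` {i. Suc i < length ps}"
  by (auto simp: path_edges_def)

lemma path_edges_split: "path_edges ps = evenE ps \<union> oddE ps"
  by (auto simp: path_edges_def evenE_def oddE_def)

lemma pe_inj:
  assumes "distinct ps" "Suc i < length ps" "Suc j < length ps" "path_edge ps i = path_edge ps j"
  shows "i = j"
proof -
  have a: "ps!i \<in> {ps!j, ps!Suc j}" using assms(4) by (auto simp: path_edge_def)
  have b: "ps!Suc i \<in> {ps!j, ps!Suc j}" using assms(4) by (auto simp: path_edge_def)
  from a have "i = j \<or> i = Suc j" using assms(1-3) by (auto simp: nth_eq_iff_index_eq)
  moreover from b have "Suc i = j \<or> i = j" using assms(1-3) by (auto simp: nth_eq_iff_index_eq)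
  ultimately show ?thesis by auto
qed

lemma pe_disj:
  assumes "distinct ps" "i + 2 \<le> j" "Suc j < length ps"
  shows "path_edge ps i \<inter> path_edge ps j = {}"
  using assms by (auto simp: path_edge_def nth_eq_iff_index_eq)

lemma pe_sub_set: "Suc i < length ps \<Longrightarrow> path_edge ps i \<subseteq> set ps"
  by (auto simp: path_edge_def)

lemma path_edges_sub_set: "e \<in> path_edges ps \<Longrightarrow> e \<subseteq> set ps"
  by (auto simp: path_edges_def path_edge_def)

lemma card_even_idx: "card {i. i < m \<and> even i} = (m+1) div 2"
proof (induction m)
  case 0 then show ?case by simp
next
  case (Suc m)
  show ?case
  proof (cases "even m")
    case True
    then have "{i. i < Suc m \<and> even i} = insert m {i. i < m \<and> even i}" by auto
    then show ?thesis using Suc True by simp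
  next
    case False
    then have "{i. i < Suc m \<and> even i} = {i. i < m \<and> even i}" using less_Suc_eq by auto
    then show ?thesis using Suc False by simp
  qed
qed

lemma card_odd_idx: "card {i. i < m \<and> odd i} = m div 2"
proof (induction m)
  case 0 then show ?case by simp
next
  case (Suc m)
  show ?case
  proof (cases "odd m")
    case True
    then have "{i. i < Suc m \<and> odd i} = insert m {i. i < m \<and> odd i}" by auto
    then show ?thesis using Suc True by simp
  next
    case False
    then have "{i. i < Suc m \<and> odd i} = {i. i < m \<and> odd i}" using less_Suc_eq by auto
    then show ?thesis using Suc False by simp
  qed
qed

lemma inj_pe: "distinct ps \<Longrightarrow> inj_on (\<lambda>i. path_edge ps i) {i. Suc i < length ps \<and> P i}"
  by (auto simp: inj_on_def intro: pe_inj)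

lemma card_path_edges: "distinct ps \<Longrightarrow> card (path_edges ps) = length ps - 1"
proof -
  assume d: "distinct ps"
  have "inj_on (\<lambda>i. path_edge ps i) {i. Suc i < length ps}"
    by (auto simp: inj_on_def intro: pe_inj[OF d])
  then have "card (path_edges ps) = card {i. Suc i < length ps}"
    by (simp add: path_edges_image card_image)
  also have "{i. Suc i < length ps} = {..< length ps - 1}" by auto
  finally show ?thesis by simp
qed

lemma card_evenE: "distinct ps \<Longrightarrow> length ps \<ge> 1 \<Longrightarrow> card (evenE ps) = length ps div 2"
proof -
  assume d: "distinct ps" and l: "length ps \<ge> 1"
  have "card (evenE ps) = card {i. Suc i < length ps \<and> even i}"
    unfolding evenE_def by (rule card_image[OF inj_pe[OF d]])
  also have "{i. Suc i < length ps \<and> even i} = {i. i < length ps - 1 \<and> even i}" by auto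
  also have "card \<dots> = (length ps - 1 + 1) div 2" by (rule card_even_idx)
  finally show ?thesis using l by simp
qed

lemma card_oddE: "distinct ps \<Longrightarrow> card (oddE ps) = (length ps - 1) div 2"
proof -
  assume d: "distinct ps"
  have "card (oddE ps) = card {i. Suc i < length ps \<and> odd i}"
    unfolding oddE_def by (rule card_image[OF inj_pe[OF d]])
  also have "{i. Suc i < length ps \<and> odd i} = {i. i < length ps - 1 \<and> odd i}" by auto
  also have "card \<dots> = (length ps - 1) div 2" by (rule card_odd_idx)
  finally show ?thesis by simp
qed

lemma finite_path_edges: "finite (path_edges ps)"
proof -
  have "{i. Suc i < length ps} \<subseteq> {..<length ps}" by auto
  then have "finite {i. Suc i < length ps}" using finite_subset by blast
  then show ?thesis by (simp add: path_edges_image)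
qed

lemma alt_edges: "alt A B ps \<Longrightarrow> path_edges ps \<subseteq> A \<union> B"
  unfolding alt_def path_edges_def by (auto split: if_splits)

lemma alt_evenE: "alt A B ps \<Longrightarrow> evenE ps \<subseteq> B"
  unfolding alt_def evenE_def by auto

lemma alt_oddE: "alt A B ps \<Longrightarrow> oddE ps \<subseteq> A"
  unfolding alt_def oddE_def by auto

lemma alt_split:
  assumes "alt A B ps" "A \<inter> B = {}"
  shows "path_edges ps \<inter> B = evenE ps" "path_edges ps \<inter> A = oddE ps"
  using alt_evenE[OF assms(1)] alt_oddE[OF assms(1)] assms(2) path_edges_split[of ps] by blast+

lemma alt_mono: "alt A B ps \<Longrightarrow> A \<subseteq> A' \<Longrightarrow> B \<subseteq> B' \<Longrightarrow> alt A' B' ps"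
  unfolding alt_def by (auto split: if_splits)

lemma vert_idx: "x \<in> set ps \<Longrightarrow> \<exists>p. p < length ps \<and> x = ps ! p"
  by (metis in_set_conv_nth)

lemma vert_even:
  assumes "even (length ps)" "length ps \<ge> 2" "p < length ps"
  shows "\<exists>i. Suc i < length ps \<and> even i \<and> ps!p \<in> path_edge ps i"
proof (cases "even p")
  case True
  then have "Suc p < length ps" using assms
    by (metis Suc_lessI even_Suc)
  then show ?thesis using True by (auto simp: path_edge_def)
next
  case False
  then obtain q where "p = Suc q" by (cases p) auto
  then show ?thesis using False assms by (intro exI[of _ q]) (auto simp: path_edge_def)
qed

lemma vert_odd:
  assumes "0 < p" "Suc p < length ps"
  shows "\<exists>i. Suc i < length ps \<and> odd i \<and> ps!p \<in> path_edge ps i"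
proof (cases "odd p")
  case True
  then show ?thesis using assms by (auto simp: path_edge_def)
next
  case False
  then obtain q where "p = Suc q" using assms by (cases p) auto
  then show ?thesis using False assms by (intro exI[of _ q]) (auto simp: path_edge_def)
qed

lemma hd_ne_last: "distinct xs \<Longrightarrow> length xs \<ge> 2 \<Longrightarrow> hd xs \<noteq> last xs"
  by (cases xs) (auto)

lemma simple_edge:
  assumes "simple G" "e \<in> G" "v \<in> e"
  obtains w where "e = {v, w}" "v \<noteq> w"
proof -
  obtain x y where "x \<noteq> y" "e = {x,y}" using assms(1,2) unfolding simple_def by blast
  then show ?thesis using that assms(3) by (metis insert_commute insertE singletonD)
qed

lemma mat_evenE: "distinct ps \<Longrightarrow> mat (evenE ps)"
  unfolding mat_def evenE_def
proof (clarify)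
  fix i j
  assume d: "distinct ps" and ij: "Suc i < length ps" "even i" "Suc j < length ps" "even j"
    "path_edge ps i \<noteq> path_edge ps j"
  then have "i \<noteq> j" by auto
  with ij have "i + 2 \<le> j \<or> j + 2 \<le> i" by presburger
  then show "path_edge ps i \<inter> path_edge ps j = {}"
    using pe_disj[OF d] ij by (metis inf_commute)
qed

lemma mat_oddE: "distinct ps \<Longrightarrow> mat (oddE ps)"
  unfolding mat_def oddE_def
proof (clarify)
  fix i j
  assume d: "distinct ps" and ij: "Suc i < length ps" "odd i" "Suc j < length ps" "odd j"
    "path_edge ps i \<noteq> path_edge ps j"
  then have "i \<noteq> j" by auto
  with ij have "i + 2 \<le> j \<or> j + 2 \<le> i" by presburger
  then show "path_edge ps i \<inter> path_edge ps j = {}"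
    using pe_disj[OF d] ij by (metis inf_commute)
qed

lemma alt_vert_even:
  assumes "alt A B ps" "even (length ps)" "x \<in> set ps"
  shows "\<exists>g\<in>evenE ps. x \<in> g"
proof -
  obtain p where p: "p < length ps" "x = ps!p" using vert_idx[OF assms(3)] by blast
  have "length ps \<ge> 2" using assms(1) by (simp add: alt_def)
  from vert_even[OF assms(2) this p(1)] p show ?thesis unfolding evenE_def by blast
qed

lemma alt_vert_odd:
  assumes "alt A B ps" "x \<in> set ps" "x \<noteq> hd ps" "x \<noteq> last ps"
  shows "\<exists>h\<in>oddE ps. x \<in> h"
proof -
  obtain p where p: "p < length ps" "x = ps!p" using vert_idx[OF assms(2)] by blast
  have ne: "ps \<noteq> []" using assms(2) by auto
  have "p \<noteq> 0" using p assms(3) ne by (metis hd_conv_nth)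
  moreover have "p \<noteq> length ps - 1" using p assms(4) ne by (metis last_conv_nth)
  ultimately have "0 < p" "Suc p < length ps" using p by auto
  from vert_odd[OF this] p show ?thesis unfolding oddE_def by blast
qed

lemma alt_vert:
  assumes "alt A B ps" "x \<in> set ps"
  shows "\<exists>e\<in>A \<union> B. x \<in> e"
proof -
  obtain p where p: "p < length ps" "x = ps!p" using vert_idx[OF assms(2)] by blast
  have l: "length ps \<ge> 2" using assms(1) by (simp add: alt_def)
  show ?thesis
  proof (cases "Suc p < length ps")
    case True
    then have "path_edge ps p \<in> A \<union> B" using assms(1) unfolding alt_def by (auto split: if_splits)
    then show ?thesis using p by (auto simp: path_edge_def)
  next
    case False
    then obtain q where q: "p = Suc q" using l p by (cases p) auto
    then have "path_edge ps q \<in> A \<union> B" using assms(1) p unfolding alt_def by (auto split: if_splits)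
    then show ?thesis using p q by (auto simp: path_edge_def)
  qed
qed

lemma aug_alt:
  assumes "augmenting_path G M P"
  shows "alt M (G - M) P" "even (length P)"
proof -
  have ip: "is_path G P" and l: "length P \<ge> 2" and eh: "exposed M (hd P)" and el: "exposed M (last P)"
    and alt: "\<And>i. Suc (Suc i) < length P \<Longrightarrow> (path_edge P i \<in> M \<longleftrightarrow> path_edge P (Suc i) \<notin> M)"
    using assms unfolding augmenting_path_def by auto
  have ne: "P \<noteq> []" using l by auto
  have par: "path_edge P i \<in> M \<longleftrightarrow> odd i" if "Suc i < length P" for i
    using that
  proof (induction i)
    case 0
    have "hd P \<in> path_edge P 0" using ne by (simp add: path_edge_def hd_conv_nth)
    then show ?case using eh unfolding exposed_def by auto
  next
    case (Suc i)
    then show ?case using alt[of i] by auto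
  qed
  show "alt M (G - M) P"
    unfolding alt_def using ip l par unfolding is_path_def by auto
  have "last P \<in> path_edge P (length P - 2)"
    using l ne by (simp add: path_edge_def last_conv_nth Suc_diff_Suc numeral_2_eq_2)
  then have "path_edge P (length P - 2) \<notin> M" using el unfolding exposed_def by auto
  then have "even (length P - 2)" using par[of "length P - 2"] l by auto
  then show "even (length P)" using l by auto
qed

lemma alt_aug:
  assumes "alt A B P" "A \<subseteq> M" "B \<inter> M = {}" "A \<union> B \<subseteq> G" "exposed M (hd P)" "exposed M (last P)"
  shows "augmenting_path G M P"
proof -
  have d: "distinct P" and l: "length P \<ge> 2"
    and e: "\<And>i. Suc i < length P \<Longrightarrow> path_edge P i \<in> (if even i then B else A)"
    using assms(1) unfolding alt_def by auto
  have par: "path_edge P i \<in> M \<longleftrightarrow> odd i" if "Suc i < length P" for i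
    using e[OF that] assms(2,3) by (auto split: if_splits)
  have "path_edge P i \<in> G" if "Suc i < length P" for i
  proof -
    have "path_edge P i \<in> A \<union> B" using e[OF that] by (auto split: if_splits)
    then show ?thesis using assms(4) by blast
  qed
  then have "is_path G P" unfolding is_path_def using d l by auto
  moreover have "hd P \<noteq> last P" using hd_ne_last[OF d l] .
  ultimately show ?thesis unfolding augmenting_path_def using l assms(5,6) par
    by (auto simp: Suc_lessD)
qed

lemma even_div_lem: "even (n::nat) \<Longrightarrow> n \<ge> 2 \<Longrightarrow> n div 2 = (n - 1) div 2 + 1"
proof -
  assume "even n" "n \<ge> 2"
  then obtain m where "n = 2*m" "m \<ge> 1" by (auto elim: evenE)
  then show ?thesis by (cases m) auto
qed

lemma mat_union2:
  assumes "mat X" "mat Y" "\<And>e f. e \<in> X \<Longrightarrow> f \<in> Y \<Longrightarrow> e \<inter> f = {}"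
  shows "mat (X \<union> Y)"
  unfolding mat_def
proof (intro ballI impI)
  fix e1 e2 assume e: "e1 \<in> X \<union> Y" "e2 \<in> X \<union> Y" "e1 \<noteq> e2"
  show "e1 \<inter> e2 = {}"
  proof (cases "e1 \<in> X")
    case True
    show ?thesis
    proof (cases "e2 \<in> X")
      case True
      then show ?thesis using \<open>e1 \<in> X\<close> e(3) assms(1) unfolding mat_def by blast
    next
      case False
      then show ?thesis using \<open>e1 \<in> X\<close> e(2) assms(3)[of e1 e2] by blast
    qed
  next
    case False
    then have "e1 \<in> Y" using e by blast
    show ?thesis
    proof (cases "e2 \<in> X")
      case True
      then show ?thesis using \<open>e1 \<in> Y\<close> assms(3)[of e2 e1] by blast
    next
      case False
      then show ?thesis using \<open>e1 \<in> Y\<close> e assms(2) unfolding mat_def by blast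
    qed
  qed
qed

lemma card_aug:
  assumes "mat M" "finite M" "alt A X P" "A \<subseteq> M" "X \<inter> M = {}" "even (length P)"
    "exposed M (hd P)" "exposed M (last P)"
  shows "mat (symdiff M (path_edges P))" "card (symdiff M (path_edges P)) = card M + 1"
proof -
  have d: "distinct P" and l: "length P \<ge> 2" using assms(3) unfolding alt_def by auto
  have oA: "oddE P \<subseteq> M" using alt_oddE[OF assms(3)] assms(4) by auto
  have eX: "evenE P \<inter> M = {}" using alt_evenE[OF assms(3)] assms(5) by auto
  have sd: "symdiff M (path_edges P) = (M - oddE P) \<union> evenE P"
    using oA eX path_edges_split[of P] unfolding symdiff_def by blast
  have fe: "finite (evenE P)" "finite (oddE P)"
    using finite_path_edges[of P] path_edges_split[of P] by (metis finite_Un)+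
  have "card ((M - oddE P) \<union> evenE P) = card (M - oddE P) + card (evenE P)"
    by (rule card_Un_disjoint) (use assms(2) fe eX in auto)
  also have "card (M - oddE P) = card M - card (oddE P)"
    using card_Diff_subset[OF fe(2) oA] .
  also have "card (oddE P) = (length P - 1) div 2" using card_oddE[OF d] .
  also have "card (evenE P) = length P div 2" using card_evenE[OF d] l by auto
  finally have c: "card (symdiff M (path_edges P)) = card M - (length P - 1) div 2 + length P div 2"
    using sd by simp
  have "card (oddE P) \<le> card M" using card_mono[OF assms(2) oA] .
  then have "(length P - 1) div 2 \<le> card M" using card_oddE[OF d] by simp
  moreover have "length P div 2 = (length P - 1) div 2 + 1" using assms(6) l
    by (rule even_div_lem)
  ultimately show "card (symdiff M (path_edges P)) = card M + 1" using c by simp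
  have cross: "e \<inter> f = {}" if ef: "e \<in> M - oddE P" "f \<in> evenE P" for e f
  proof (rule ccontr)
    assume "e \<inter> f \<noteq> {}"
    then obtain x where x: "x \<in> e" "x \<in> f" by blast
    have "f \<in> path_edges P" using ef path_edges_split by blast
    then have xs: "x \<in> set P" using x path_edges_sub_set by blast
    have "x \<noteq> hd P" using assms(7) x ef unfolding exposed_def by blast
    moreover have "x \<noteq> last P" using assms(8) x ef unfolding exposed_def by blast
    ultimately obtain h where h: "h \<in> oddE P" "x \<in> h" using alt_vert_odd[OF assms(3) xs] by blast
    then have "h = e" using mat_eq[OF assms(1), of h e x] oA ef x by blast
    then show False using h ef by blast
  qed
  show "mat (symdiff M (path_edges P))"
    unfolding sd by (rule mat_union2[OF mat_sub[OF assms(1)] mat_evenE[OF d] cross]) auto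
qed

lemma card_swap:
  assumes "mat M" "mat N" "finite N" "alt (M - N) (N - M) P" "even (length P)"
  shows "mat (symdiff N (path_edges P))" "card (symdiff N (path_edges P)) + 1 = card N"
proof -
  have d: "distinct P" and l: "length P \<ge> 2" using assms(4) unfolding alt_def by auto
  have oA: "oddE P \<inter> N = {}" using alt_oddE[OF assms(4)] by auto
  have eN: "evenE P \<subseteq> N" using alt_evenE[OF assms(4)] by auto
  have sd: "symdiff N (path_edges P) = (N - evenE P) \<union> oddE P"
    using oA eN path_edges_split[of P] unfolding symdiff_def by blast
  have fe: "finite (evenE P)" "finite (oddE P)"
    using finite_path_edges[of P] path_edges_split[of P] by (metis finite_Un)+
  have "card ((N - evenE P) \<union> oddE P) = card (N - evenE P) + card (oddE P)"
    by (rule card_Un_disjoint) (use assms(3) fe oA in auto)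
  also have "card (N - evenE P) = card N - card (evenE P)"
    using card_Diff_subset[OF fe(1) eN] .
  finally have c: "card (symdiff N (path_edges P)) = card N - length P div 2 + (length P - 1) div 2"
    using sd card_oddE[OF d] card_evenE[OF d] l by simp
  have "card (evenE P) \<le> card N" using card_mono[OF assms(3) eN] .
  then have "length P div 2 \<le> card N" using card_evenE[OF d] l by simp
  moreover have "length P div 2 = (length P - 1) div 2 + 1" using assms(5) l
    by (rule even_div_lem)
  ultimately show "card (symdiff N (path_edges P)) + 1 = card N" using c by simp
  have cross: "e \<inter> f = {}" if ef: "e \<in> N - evenE P" "f \<in> oddE P" for e f
  proof (rule ccontr)
    assume "e \<inter> f \<noteq> {}"
    then obtain x where x: "x \<in> e" "x \<in> f" by blast
    have "f \<in> path_edges P" using ef path_edges_split by blast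
    then have xs: "x \<in> set P" using x path_edges_sub_set by blast
    obtain g where g: "g \<in> evenE P" "x \<in> g" using alt_vert_even[OF assms(4,5) xs] by blast
    then have "g = e" using mat_eq[OF assms(2), of g e x] eN ef x by blast
    then show False using g ef by blast
  qed
  show "mat (symdiff N (path_edges P))"
    unfolding sd by (rule mat_union2[OF mat_sub[OF assms(2)] mat_oddE[OF d] cross]) auto
qed

lemma pe_cons2: "path_edge (x#y#ps) (Suc (Suc i)) = path_edge ps i"
  by (simp add: path_edge_def)

lemma pe_cons0: "path_edge (x#y#ps) 0 = {x,y}"
  by (simp add: path_edge_def)

lemma pe_cons1: "ps \<noteq> [] \<Longrightarrow> path_edge (x#y#ps) (Suc 0) = {y, hd ps}"
  by (simp add: path_edge_def hd_conv_nth)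

lemma path_edges_cons2: "path_edges ps \<subseteq> path_edges (x#y#ps)"
proof
  fix e assume "e \<in> path_edges ps"
  then obtain i where "Suc i < length ps" "e = path_edge ps i" by (auto simp: path_edges_def)
  then show "e \<in> path_edges (x#y#ps)" unfolding path_edges_def
    by (intro CollectI exI[of _ "Suc (Suc i)"]) (simp add: pe_cons2)
qed

lemma pe_in_edges: "Suc i < length ps \<Longrightarrow> path_edge ps i \<in> path_edges ps"
  by (auto simp: path_edges_def)

lemma walk:
  assumes "finite A" "finite B" "mat A" "mat B" "A \<inter> B = {}" "simple (A \<union> B)" "exposed A v" "v \<in> \<Union>B"
  shows "\<exists>ps. alt A B ps \<and> hd ps = v \<and>
    ((even (length ps) \<and> exposed A (last ps)) \<or>
     (odd (length ps) \<and> exposed B (last ps) \<and> (\<forall>e\<in>A\<union>B. e \<inter> set ps \<noteq> {} \<longrightarrow> e \<in> path_edges ps)))"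
  using assms
proof (induction "card A + card B" arbitrary: A B v rule: less_induct)
  case less
  obtain b where b: "b \<in> B" "v \<in> b" using less.prems(8) by blast
  obtain v1 where bv: "b = {v, v1}" "v \<noteq> v1"
    using simple_edge[OF less.prems(6), of b v] b by blast
  show ?case
  proof (cases "exposed A v1")
    case True
    let ?ps = "[v, v1]"
    have "alt A B ?ps" unfolding alt_def
    proof (intro conjI allI impI)
      fix i assume "Suc i < length ?ps"
      then have "i = 0" by simp
      then show "path_edge ?ps i \<in> (if even i then B else A)" using b bv by (simp add: path_edge_def)
    qed (use bv in auto)
    then show ?thesis using True by (intro exI[of _ ?ps]) auto
  next
    case False
    then obtain a where a: "a \<in> A" "v1 \<in> a" unfolding exposed_def by blast
    obtain v2 where av: "a = {v1, v2}" "v1 \<noteq> v2"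
      using simple_edge[OF less.prems(6), of a v1] a by blast
    have v2v: "v2 \<noteq> v" using less.prems(7) a av unfolding exposed_def by blast
    show ?thesis
    proof (cases "exposed B v2")
      case True
      let ?ps = "[v, v1, v2]"
      have altp: "alt A B ?ps" unfolding alt_def
      proof (intro conjI allI impI)
        fix i assume "Suc i < length ?ps"
        then have "i = 0 \<or> i = 1" by auto
        then show "path_edge ?ps i \<in> (if even i then B else A)" using a b bv av
          by (auto simp: path_edge_def)
      qed (use bv av v2v in auto)
      have pe: "b \<in> path_edges ?ps" "a \<in> path_edges ?ps"
        using pe_in_edges[of 0 ?ps] pe_in_edges[of 1 ?ps] bv av by (auto simp: path_edge_def)
      have closed: "e \<in> path_edges ?ps" if eAB: "e \<in> A \<union> B" "e \<inter> set ?ps \<noteq> {}" for e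
      proof -
        obtain x where x: "x \<in> e" "x \<in> {v, v1, v2}" using eAB(2) by auto
        show ?thesis
        proof (cases "e \<in> A")
          case True
          then have "x \<noteq> v" using less.prems(7) x unfolding exposed_def by blast
          then have "x \<in> a" using x av by auto
          then have "e = a" using mat_eq[OF less.prems(3) True a(1)] x by blast
          then show ?thesis using pe by simp
        next
          case False
          then have eB: "e \<in> B" using eAB by auto
          then have "x \<noteq> v2" using True x unfolding exposed_def by blast
          then have "x \<in> b" using x bv by auto
          then have "e = b" using mat_eq[OF less.prems(4) eB b(1)] x by blast
          then show ?thesis using pe by simp
        qed
      qed
      show ?thesis using altp True closed by (intro exI[of _ ?ps]) auto
    next
      case False
      define A' where "A' = A - {a}"
      define B' where "B' = B - {b}"
      obtain b' where b': "b' \<in> B" "v2 \<in> b'" using False unfolding exposed_def by blast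
      have "v2 \<notin> b" using bv v2v av by auto
      then have "b' \<in> B'" using b' unfolding B'_def by auto
      then have v2B: "v2 \<in> \<Union>B'" using b' by auto
      have v2A: "exposed A' v2" unfolding exposed_def A'_def
        using mat_eq[OF less.prems(3) _ a(1)] av by blast
      have "card A > 0" "card B > 0" using less.prems(1,2) a b card_gt_0_iff by blast+
      then have lt: "card A' + card B' < card A + card B"
        unfolding A'_def B'_def using less.prems(1,2) a b by simp
      have prem: "finite A'" "finite B'" "mat A'" "mat B'" "A' \<inter> B' = {}" "simple (A' \<union> B')"
        using less.prems(1-6) unfolding A'_def B'_def
        by (auto intro: mat_sub simple_sub)
      obtain ps' where ps': "alt A' B' ps'" "hd ps' = v2"
        "(even (length ps') \<and> exposed A' (last ps')) \<or>
         (odd (length ps') \<and> exposed B' (last ps') \<and> (\<forall>e\<in>A'\<union>B'. e \<inter> set ps' \<noteq> {} \<longrightarrow> e \<in> path_edges ps'))"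
        using less.hyps[OF lt prem v2A v2B] by blast
      have ne: "ps' \<noteq> []" using ps'(1) unfolding alt_def by auto
      have notin: "x \<notin> set ps'" if "x = v \<or> x = v1" for x
      proof
        assume "x \<in> set ps'"
        then obtain e where e: "e \<in> A' \<union> B'" "x \<in> e" using alt_vert[OF ps'(1)] by blast
        show False
        proof (cases "e \<in> A'")
          case True
          then have "e \<in> A" "e \<noteq> a" unfolding A'_def by auto
          then show False using that e less.prems(7) mat_eq[OF less.prems(3) _ a(1), of e x] a av
            unfolding exposed_def by blast
        next
          case False
          then have "e \<in> B" "e \<noteq> b" using e unfolding B'_def by auto
          then show False using that e mat_eq[OF less.prems(4) _ b(1), of e x] bv by blast
        qed
      qed
      let ?ps = "v # v1 # ps'"
      have altp: "alt A B ?ps" unfolding alt_def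
      proof (intro conjI allI impI)
        show "distinct ?ps" using ps'(1) notin bv unfolding alt_def by auto
        show "2 \<le> length ?ps" by simp
        fix i assume i: "Suc i < length ?ps"
        show "path_edge ?ps i \<in> (if even i then B else A)"
        proof (cases i)
          case 0 then show ?thesis using b bv by (simp add: pe_cons0)
        next
          case (Suc j)
          show ?thesis
          proof (cases j)
            case 0 then show ?thesis using Suc a av ne ps'(2) by (simp add: pe_cons1)
          next
            case (Suc l)
            then have "path_edge ps' l \<in> (if even l then B' else A')"
              using ps'(1) i \<open>i = Suc j\<close> unfolding alt_def by auto
            then show ?thesis using Suc \<open>i = Suc j\<close> unfolding A'_def B'_def
              by (auto simp: pe_cons2 split: if_splits)
          qed
        qed
      qed
      have lastp: "last ?ps = last ps'" using ne by simp
      have lenp: "even (length ?ps) = even (length ps')" by simp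
      have "hd ps' \<noteq> last ps'" using ps'(1) hd_ne_last unfolding alt_def by blast
      show ?thesis
      proof (cases "even (length ps')")
        case True
        then have ex: "exposed A' (last ps')" using ps'(3) by auto
        have "exposed A (last ps')" unfolding exposed_def
        proof
          fix e assume e: "e \<in> A"
          show "last ps' \<notin> e"
          proof
            assume l: "last ps' \<in> e"
            then have "e = a" using ex e unfolding exposed_def A'_def by blast
            then have "last ps' = v1 \<or> last ps' = v2" using l av by auto
            then show False using notin[of v1] ne \<open>hd ps' \<noteq> last ps'\<close> ps'(2) by auto
          qed
        qed
        then show ?thesis using altp True lastp by (intro exI[of _ ?ps]) auto
      next
        case False
        then have ex: "exposed B' (last ps')"
          and cl: "\<forall>e\<in>A'\<union>B'. e \<inter> set ps' \<noteq> {} \<longrightarrow> e \<in> path_edges ps'" using ps'(3) by auto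
        have "exposed B (last ps')" unfolding exposed_def
        proof
          fix e assume e: "e \<in> B"
          show "last ps' \<notin> e"
          proof
            assume l: "last ps' \<in> e"
            then have "e = b" using ex e unfolding exposed_def B'_def by blast
            then have "last ps' = v \<or> last ps' = v1" using l bv by auto
            then show False using notin[of v] notin[of v1] last_in_set[OF ne] by auto
          qed
        qed
        moreover have "e \<in> path_edges ?ps" if e: "e \<in> A \<union> B" "e \<inter> set ?ps \<noteq> {}" for e
        proof (cases "e = a \<or> e = b")
          case True
          have "b \<in> path_edges ?ps" using pe_in_edges[of 0 ?ps] bv by (simp add: pe_cons0)
          moreover have "a \<in> path_edges ?ps" using pe_in_edges[of 1 ?ps] av ne ps'(2)
            by (simp add: pe_cons1)
          ultimately show ?thesis using True by auto
        next
          case False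
          then have e': "e \<in> A' \<union> B'" using e unfolding A'_def B'_def by auto
          have "e \<inter> set ps' \<noteq> {}"
          proof
            assume "e \<inter> set ps' = {}"
            then obtain x where x: "x \<in> e" "x = v \<or> x = v1" using e by auto
            have xb: "x \<in> b" using x bv by auto
            show False
            proof (cases "e \<in> A")
              case True
              show False
              proof (cases "x = v")
                case True
                then show False using x \<open>e \<in> A\<close> less.prems(7) unfolding exposed_def by blast
              next
                case False
                then have "x = v1" using x by blast
                then have "e = a" using mat_eq[OF less.prems(3) \<open>e \<in> A\<close> a(1)] x a by blast
                then show False using \<open>\<not>(e = a \<or> e = b)\<close> by blast
              qed
            next
              case False
              then have "e \<in> B" using e by auto
              then have "e = b" using mat_eq[OF less.prems(4) _ b(1)] x xb by blast
              then show False using \<open>\<not>(e = a \<or> e = b)\<close> by blast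
            qed
          qed
          then have "e \<in> path_edges ps'" using cl e' by simp
          then show ?thesis using path_edges_cons2[of ps' v v1] by (rule subsetD[rotated])
        qed
        ultimately show ?thesis using altp False lastp by (intro exI[of _ ?ps]) auto
      qed
    qed
  qed
qed

lemma card_Union_mat:
  assumes "finite B" "mat B" "simple B"
  shows "card (\<Union>B) = 2 * card B"
proof -
  have "pairwise disjnt B" using assms(2) unfolding mat_def pairwise_def disjnt_def by blast
  moreover have "\<And>e. e \<in> B \<Longrightarrow> finite e" using assms(3) unfolding simple_def by auto
  ultimately have "card (\<Union>B) = sum card B" by (rule card_Union_disjoint)
  also have "\<dots> = sum (\<lambda>_. 2) B"
    by (rule sum.cong) (use assms(3) in \<open>auto simp: simple_def\<close>)
  finally show ?thesis by simp
qed

lemma card_Union_le2: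
  assumes "finite A" "simple A"
  shows "card (\<Union>A) \<le> 2 * card A"
proof -
  have "card (\<Union>A) \<le> sum card A" by (rule card_Union_le_sum_card)
  also have "\<dots> = sum (\<lambda>_. 2) A"
    by (rule sum.cong) (use assms(2) in \<open>auto simp: simple_def\<close>)
  finally show ?thesis by simp
qed

lemma alt_edge: "alt A B ps \<Longrightarrow> Suc i < length ps \<Longrightarrow> path_edge ps i \<in> (if even i then B else A)"
  by (simp add: alt_def)

lemma alt_edge0: "alt A B ps \<Longrightarrow> path_edge ps 0 \<in> B"
proof -
  assume a: "alt A B ps"
  then have "Suc 0 < length ps" by (simp add: alt_def)
  from alt_edge[OF a this] show ?thesis by simp
qed

lemma odd_div_lem: "odd (n::nat) \<Longrightarrow> n \<ge> 2 \<Longrightarrow> n div 2 = (n - 1) div 2 \<and> (n - 1) div 2 \<ge> 1"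
proof -
  assume "odd n" "n \<ge> 2"
  then obtain m where "n = 2*m + 1" "m \<ge> 1" by (auto elim: oddE)
  then show ?thesis by simp
qed

lemma last_idx: "even (n::nat) \<Longrightarrow> n \<ge> 2 \<Longrightarrow> Suc (n - 2) < n \<and> even (n - 2)"
  by auto

lemma last_edge: "length ps \<ge> 2 \<Longrightarrow> last ps \<in> path_edge ps (length ps - 2)"
proof -
  assume l: "length ps \<ge> 2"
  then have "Suc (length ps - 2) = length ps - 1" by simp
  moreover have "ps \<noteq> []" using l by auto
  ultimately show ?thesis using l by (simp add: path_edge_def last_conv_nth)
qed

lemma extract_path:
  assumes "finite A" "finite B" "mat A" "mat B" "A \<inter> B = {}" "simple (A \<union> B)" "card A < card B"
  shows "\<exists>ps. alt A B ps \<and> even (length ps) \<and> exposed A (hd ps) \<and> exposed A (last ps)"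
  using assms
proof (induction "card A" arbitrary: A B rule: less_induct)
  case less
  have sA: "simple A" "simple B" using less.prems(6) simple_sub by blast+
  have "\<not> \<Union>B \<subseteq> \<Union>A"
  proof
    assume "\<Union>B \<subseteq> \<Union>A"
    moreover have "finite (\<Union>A)" using less.prems(1) sA(1) unfolding simple_def by auto
    ultimately have "card (\<Union>B) \<le> card (\<Union>A)" by (rule card_mono[rotated])
    then show False using card_Union_mat[OF less.prems(2,4) sA(2)] card_Union_le2[OF less.prems(1) sA(1)]
      less.prems(7) by linarith
  qed
  then obtain v where v: "v \<in> \<Union>B" "v \<notin> \<Union>A" by blast
  have vA: "exposed A v" using v(2) unfolding exposed_def by blast
  obtain ps where ps: "alt A B ps" "hd ps = v"
    "(even (length ps) \<and> exposed A (last ps)) \<or>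
     (odd (length ps) \<and> exposed B (last ps) \<and> (\<forall>e\<in>A\<union>B. e \<inter> set ps \<noteq> {} \<longrightarrow> e \<in> path_edges ps))"
    using walk[OF less.prems(1-6) vA v(1)] by blast
  show ?case
  proof (cases "even (length ps)")
    case True
    then show ?thesis using ps vA by auto
  next
    case False
    then have cl: "\<And>e. e \<in> A \<union> B \<Longrightarrow> e \<inter> set ps \<noteq> {} \<Longrightarrow> e \<in> path_edges ps" using ps(3) by auto
    have d: "distinct ps" and l: "length ps \<ge> 2" using ps(1) unfolding alt_def by auto
    define A' where "A' = A - path_edges ps"
    define B' where "B' = B - path_edges ps"
    have iA: "A \<inter> path_edges ps = oddE ps" and iB: "B \<inter> path_edges ps = evenE ps"
      using alt_split[OF ps(1) less.prems(5)] by blast+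
    have ce: "card (evenE ps) = card (oddE ps)" using card_evenE[OF d] card_oddE[OF d] l
      odd_div_lem[OF False l] by simp
    have co: "card (oddE ps) \<ge> 1" using card_oddE[OF d] odd_div_lem[OF False l] by simp
    have fo: "finite (oddE ps)" "finite (evenE ps)"
      using finite_path_edges[of ps] path_edges_split[of ps] by (metis finite_Un)+
    have cA': "card A' = card A - card (oddE ps)"
      unfolding A'_def using card_Diff_subset_Int[of A "path_edges ps"] less.prems(1) iA fo by simp
    have cB': "card B' = card B - card (evenE ps)"
      unfolding B'_def using card_Diff_subset_Int[of B "path_edges ps"] less.prems(2) iB fo by simp
    have "card (oddE ps) \<le> card A"
      using card_mono[OF less.prems(1), of "oddE ps"] iA by blast
    then have lt1: "card A' < card A" using cA' co by linarith
    have lt2: "card A' < card B'" using cA' cB' ce less.prems(7) \<open>card (oddE ps) \<le> card A\<close> by linarith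
    have prem: "finite A'" "finite B'" "mat A'" "mat B'" "A' \<inter> B' = {}" "simple (A' \<union> B')"
      using less.prems(1-6) unfolding A'_def B'_def by (auto intro: mat_sub simple_sub)
    obtain qs where qs: "alt A' B' qs" "even (length qs)" "exposed A' (hd qs)" "exposed A' (last qs)"
      using less.hyps[OF lt1 prem lt2] by blast
    have dq: "distinct qs" and lq: "length qs \<ge> 2" using qs(1) unfolding alt_def by auto
    have altq: "alt A B qs" using alt_mono[OF qs(1)] unfolding A'_def B'_def by blast
    have endp: "exposed A x" if x: "exposed A' x" "x \<in> g" "g \<in> B'" for x g
      unfolding exposed_def
    proof
      fix e assume e: "e \<in> A"
      show "x \<notin> e"
      proof
        assume xe: "x \<in> e"
        then have "e \<in> path_edges ps" using x(1) e unfolding exposed_def A'_def by blast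
        then have "x \<in> set ps" using xe path_edges_sub_set by blast
        then have "g \<inter> set ps \<noteq> {}" using x(2) by blast
        moreover have "g \<in> A \<union> B" using x(3) unfolding B'_def by blast
        ultimately have "g \<in> path_edges ps" using cl by blast
        then show False using x(3) unfolding B'_def by blast
      qed
    qed
    have ne: "qs \<noteq> []" using lq by auto
    have "path_edge qs 0 \<in> B'" using alt_edge0[OF qs(1)] .
    moreover have "hd qs \<in> path_edge qs 0" using ne by (simp add: path_edge_def hd_conv_nth)
    ultimately have h: "exposed A (hd qs)" using endp qs(3) by blast
    have "path_edge qs (length qs - 2) \<in> B'" using qs(1) last_idx[OF qs(2) lq] unfolding alt_def
      by metis
    moreover have "last qs \<in> path_edge qs (length qs - 2)"
      using last_edge[OF lq] .
    ultimately have t: "exposed A (last qs)" using endp qs(4) by blast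
    show ?thesis using altq qs(2) h t by blast
  qed
qed

lemma EL_MN:
  assumes "finite M" "finite N" "mat M" "mat N" "simple (M \<union> N)" "card M < card N"
  shows "\<exists>P. alt (M - N) (N - M) P \<and> even (length P) \<and> exposed M (hd P) \<and> exposed M (last P)"
proof -
  have "card M = card (M \<inter> N) + card (M - N)" using assms(1)
    by (metis Int_Diff_disjoint Int_Diff_Un card_Un_disjoint finite_Diff finite_Int)
  moreover have "card N = card (M \<inter> N) + card (N - M)" using assms(2)
    by (metis Int_Diff_disjoint Int_Diff_Un card_Un_disjoint finite_Diff finite_Int inf_commute)
  ultimately have "card (M - N) < card (N - M)" using assms(6) by linarith
  moreover have "finite (M - N)" "finite (N - M)" "mat (M - N)" "mat (N - M)"
    "(M - N) \<inter> (N - M) = {}" "simple ((M - N) \<union> (N - M))"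
    using assms(1-5) by (auto intro: mat_sub simple_sub)
  ultimately obtain P where P: "alt (M - N) (N - M) P" "even (length P)"
    "exposed (M - N) (hd P)" "exposed (M - N) (last P)"
    using extract_path by metis
  have d: "distinct P" and l: "length P \<ge> 2" using P(1) unfolding alt_def by auto
  have ne: "P \<noteq> []" using l by auto
  have endp: "exposed M x" if x: "exposed (M - N) x" "x \<in> g" "g \<in> N - M" for x g
    unfolding exposed_def
  proof
    fix e assume e: "e \<in> M"
    show "x \<notin> e"
    proof
      assume xe: "x \<in> e"
      then have "e \<in> N" using x(1) e unfolding exposed_def by blast
      then have "e = g" using mat_eq[OF assms(4) _ _ xe x(2)] x(3) by blast
      then show False using e x(3) by blast
    qed
  qed
  have "path_edge P 0 \<in> N - M" using alt_edge0[OF P(1)] .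
  moreover have "hd P \<in> path_edge P 0" using ne by (simp add: path_edge_def hd_conv_nth)
  ultimately have h: "exposed M (hd P)" using endp P(3) by blast
  have "path_edge P (length P - 2) \<in> N - M" using P(1) last_idx[OF P(2) l] unfolding alt_def
    by metis
  moreover have "last P \<in> path_edge P (length P - 2)"
    using last_edge[OF l] .
  ultimately have t: "exposed M (last P)" using endp P(4) by blast
  show ?thesis using P h t by blast
qed

lemma count_lem:
  assumes "finite G" "simple G" "is_matching G M" "is_matching G N"
    "\<forall>P. augmenting_path G M P \<longrightarrow> 2*j \<le> path_length P"
  shows "j * (card N - card M) \<le> card (M - N)"
  using assms(4)
proof (induction "card N" arbitrary: N rule: less_induct)
  case less
  show ?case
  proof (cases "card M < card N")
    case False then show ?thesis by simp
  next
    case True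
    have mM: "M \<subseteq> G" "mat M" using assms(3) is_matching_mat by blast+
    have mN: "N \<subseteq> G" "mat N" using less.prems is_matching_mat by blast+
    have fM: "finite M" "finite N" using mM(1) mN(1) assms(1) finite_subset by blast+
    have sMN: "simple (M \<union> N)" using simple_sub[OF assms(2)] mM(1) mN(1) by blast
    obtain P where P: "alt (M - N) (N - M) P" "even (length P)" "exposed M (hd P)" "exposed M (last P)"
      using EL_MN[OF fM mM(2) mN(2) sMN True] by blast
    have aug: "augmenting_path G M P"
      by (rule alt_aug[OF P(1) _ _ _ P(3,4)]) (use mM(1) mN(1) in auto)
    have d: "distinct P" and l: "length P \<ge> 2" using P(1) unfolding alt_def by auto
    have "2 * j \<le> length P - 1" using assms(5) aug unfolding path_length_def by blast
    then have jq: "j \<le> card (oddE P)" using card_oddE[OF d] by linarith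
    define N1 where "N1 = symdiff N (path_edges P)"
    have N1: "mat N1" "card N1 + 1 = card N"
      using card_swap[OF mM(2) mN(2) fM(2) P(1,2)] unfolding N1_def by auto
    have pe: "path_edges P \<subseteq> (M - N) \<union> (N - M)" using alt_edges[OF P(1)] .
    have "N1 \<subseteq> G" using pe mM(1) mN(1) unfolding N1_def symdiff_def by blast
    then have "is_matching G N1" using N1(1) is_matching_mat by blast
    then have IH: "j * (card N1 - card M) \<le> card (M - N1)"
      using less.hyps[of N1] N1(2) by simp
    have oA: "path_edges P \<inter> (M - N) = oddE P" using alt_split(2)[OF P(1)] by blast
    have "M - N1 = (M - N) - oddE P"
      using pe oA unfolding N1_def symdiff_def by blast
    moreover have "oddE P \<subseteq> M - N" using oA by blast
    moreover have "finite (oddE P)" using fM(1) \<open>oddE P \<subseteq> M - N\<close> finite_subset by blast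
    ultimately have cMN1: "card (M - N1) = card (M - N) - card (oddE P)"
      by (simp add: card_Diff_subset)
    have "card (oddE P) \<le> card (M - N)"
      using card_mono[of "M - N" "oddE P"] fM(1) \<open>oddE P \<subseteq> M - N\<close> by blast
    moreover have "card N - card M = (card N1 - card M) + 1" using N1(2) True by linarith
    then have "j * (card N - card M) = j * (card N1 - card M) + j" by (simp add: add_mult_distrib2)
    ultimately show ?thesis using IH cMN1 jq by linarith
  qed
qed

lemma aug_sub:
  assumes "augmenting_path G1 M Q" "u \<notin> set Q" "\<forall>e\<in>G1 - G0. u \<in> e"
  shows "augmenting_path G0 M Q"
proof -
  have "path_edge Q i \<in> G0" if "Suc i < length Q" for i
  proof -
    have "path_edge Q i \<in> G1" using assms(1) that unfolding augmenting_path_def is_path_def by blast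
    moreover have "u \<notin> path_edge Q i" using pe_sub_set[OF that] assms(2) by blast
    ultimately show ?thesis using assms(3) by blast
  qed
  then show ?thesis using assms(1) unfolding augmenting_path_def is_path_def by blast
qed

lemma step_inv:
  assumes "finite G1" "simple G1" "G0 \<subseteq> G1" "\<forall>e\<in>G1 - G0. u \<in> e" "is_matching G0 M"
    "\<forall>P. augmenting_path G0 M P \<longrightarrow> k \<le> path_length P" "alg_step k G1 u M M'" "k \<ge> 1"
  shows "is_matching G1 M' \<and> (\<forall>P. augmenting_path G1 M' P \<longrightarrow> k \<le> path_length P)"
proof -
  have mM: "M \<subseteq> G1" "mat M" using assms(3,5) is_matching_mat by blast+
  have fM: "finite M" using mM(1) assms(1) finite_subset by blast
  consider (none) "\<not> (\<exists>P. augmenting_path G1 M P \<and> u \<in> set P \<and> path_length P \<le> k - 1)" "M' = M"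
    | (some) P where "augmenting_path G1 M P" "u \<in> set P"
        "\<forall>Q. augmenting_path G1 M Q \<and> u \<in> set Q \<longrightarrow> path_length P \<le> path_length Q"
        "path_length P \<le> k - 1" "M' = symdiff M (path_edges P)"
    using assms(7) unfolding alg_step_def by blast
  then show ?thesis
  proof cases
    case none
    have "k \<le> path_length Q" if Q: "augmenting_path G1 M Q" for Q
    proof (cases "u \<in> set Q")
      case True
      then show ?thesis using none(1) Q by force
    next
      case False
      then show ?thesis using aug_sub[OF Q False assms(4)] assms(6) by blast
    qed
    then show ?thesis using none(2) mM is_matching_mat by blast
  next
    case some
    note Pa = some(1)
    have aP: "alt M (G1 - M) P" "even (length P)" using aug_alt[OF Pa] by auto
    have exP: "exposed M (hd P)" "exposed M (last P)" using Pa unfolding augmenting_path_def by auto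
    have dP: "distinct P" using aP(1) unfolding alt_def by auto
    have M': "mat M'" "card M' = card M + 1"
      using card_aug[OF mM(2) fM aP(1) subset_refl _ aP(2) exP] some(5) by auto
    have PeG: "path_edges P \<subseteq> G1" using alt_edges[OF aP(1)] mM(1) by blast
    have M'G: "M' \<subseteq> G1" using PeG mM(1) some(5) unfolding symdiff_def by blast
    have fM': "finite M'" using M'G assms(1) finite_subset by blast
    have "k \<le> path_length Q" if Q: "augmenting_path G1 M' Q" for Q
    proof (rule ccontr)
      assume Qk: "\<not> k \<le> path_length Q"
      have aQ: "alt M' (G1 - M') Q" "even (length Q)" using aug_alt[OF Q] by auto
      have exQ: "exposed M' (hd Q)" "exposed M' (last Q)" using Q unfolding augmenting_path_def by auto
      have dQ: "distinct Q" using aQ(1) unfolding alt_def by auto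
      define N where "N = symdiff M' (path_edges Q)"
      have N: "mat N" "card N = card M' + 1"
        using card_aug[OF M'(1) fM' aQ(1) subset_refl _ aQ(2) exQ] unfolding N_def by auto
      have QeG: "path_edges Q \<subseteq> G1" using alt_edges[OF aQ(1)] M'G by blast
      have NG: "N \<subseteq> G1" using QeG M'G unfolding N_def symdiff_def by blast
      have fN: "finite N" using NG assms(1) finite_subset by blast
      have sMN: "simple (M \<union> N)" using simple_sub[OF assms(2)] mM(1) NG by blast
      have MN: "card M < card N" using N M' by simp
      obtain P1 where P1: "alt (M - N) (N - M) P1" "even (length P1)" "exposed M (hd P1)" "exposed M (last P1)"
        using EL_MN[OF fM fN mM(2) N(1) sMN MN] by blast
      have aug1: "augmenting_path G1 M P1"
        by (rule alt_aug[OF P1(1) _ _ _ P1(3,4)]) (use mM(1) NG in auto)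
      define N1 where "N1 = symdiff N (path_edges P1)"
      have N1: "mat N1" "card N1 + 1 = card N"
        using card_swap[OF mM(2) N(1) fN P1(1,2)] unfolding N1_def by auto
      have pe1: "path_edges P1 \<subseteq> (M - N) \<union> (N - M)" using alt_edges[OF P1(1)] .
      have N1G: "N1 \<subseteq> G1" using pe1 mM(1) NG unfolding N1_def symdiff_def by blast
      have fN1: "finite N1" using N1G assms(1) finite_subset by blast
      have sMN1: "simple (M \<union> N1)" using simple_sub[OF assms(2)] mM(1) N1G by blast
      have MN1: "card M < card N1" using N1 N M' by simp
      obtain P2 where P2: "alt (M - N1) (N1 - M) P2" "even (length P2)" "exposed M (hd P2)" "exposed M (last P2)"
        using EL_MN[OF fM fN1 mM(2) N1(1) sMN1 MN1] by blast
      have aug2: "augmenting_path G1 M P2"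
        by (rule alt_aug[OF P2(1) _ _ _ P2(3,4)]) (use mM(1) N1G in auto)
      have pe2: "path_edges P2 \<subseteq> (M - N1) \<union> (N1 - M)" using alt_edges[OF P2(1)] .
      have pe2': "path_edges P2 \<subseteq> ((M - N) \<union> (N - M)) - path_edges P1"
        using pe2 pe1 unfolding N1_def symdiff_def by blast
      have d1: "distinct P1" using P1(1) unfolding alt_def by auto
      have d2: "distinct P2" using P2(1) unfolding alt_def by auto
      have notboth: "\<not> (u \<in> set P1 \<and> u \<in> set P2)"
      proof
        assume u: "u \<in> set P1 \<and> u \<in> set P2"
        obtain e where e: "e \<in> (M - N1) \<union> (N1 - M)" "u \<in> e" using alt_vert[OF P2(1)] u by blast
        have e': "e \<in> (M - N) \<union> (N - M)" "e \<notin> path_edges P1" using e(1) pe1 unfolding N1_def symdiff_def by blast+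
        obtain g where g: "g \<in> evenE P1" "u \<in> g" using alt_vert_even[OF P1(1,2)] u by blast
        have gN: "g \<in> N - M" using alt_evenE[OF P1(1)] g(1) by blast
        have gP: "g \<in> path_edges P1" using g(1) path_edges_split by blast
        show False
        proof (cases "e \<in> N")
          case True
          then have "e = g" using mat_eq[OF N(1) True _ e(2) g(2)] gN by blast
          then show False using e' gP by blast
        next
          case False
          then have eM: "e \<in> M" using e' by blast
          have "u \<noteq> hd P1" using P1(3) eM e(2) unfolding exposed_def by blast
          moreover have "u \<noteq> last P1" using P1(4) eM e(2) unfolding exposed_def by blast
          ultimately obtain h where h: "h \<in> oddE P1" "u \<in> h" using alt_vert_odd[OF P1(1)] u by blast
          have hM: "h \<in> M" using alt_oddE[OF P1(1)] h(1) by blast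
          have "e = h" using mat_eq[OF mM(2) eM hM e(2) h(2)] .
          moreover have "h \<in> path_edges P1" using h(1) path_edges_split by blast
          ultimately show False using e' by blast
        qed
      qed
      have lb: "(if u \<in> set R then path_length P else k) \<le> path_length R"
        if R: "augmenting_path G1 M R" for R
      proof (cases "u \<in> set R")
        case True
        then show ?thesis using some(3) R by auto
      next
        case False
        then show ?thesis using aug_sub[OF R False assms(4)] assms(6) by auto
      qed
      note lb1 = lb[OF aug1] and lb2 = lb[OF aug2]
      have c1: "path_length P1 = card (path_edges P1)" using card_path_edges[OF d1] unfolding path_length_def by simp
      have c2: "path_length P2 = card (path_edges P2)" using card_path_edges[OF d2] unfolding path_length_def by simp
      have cP: "path_length P = card (path_edges P)" using card_path_edges[OF dP] unfolding path_length_def by simp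
      have cQ: "path_length Q = card (path_edges Q)" using card_path_edges[OF dQ] unfolding path_length_def by simp
      have "card (path_edges P1) + card (path_edges P2) = card (path_edges P1 \<union> path_edges P2)"
        by (rule card_Un_disjoint[symmetric]) (use finite_path_edges pe2' in auto)
      also have "\<dots> \<le> card ((M - N) \<union> (N - M))"
        by (rule card_mono) (use fM fN pe1 pe2' in auto)
      also have "(M - N) \<union> (N - M) = symdiff (path_edges P) (path_edges Q)"
        unfolding N_def some(5) symdiff_def by blast
      also have "card \<dots> \<le> card (path_edges P \<union> path_edges Q)"
        by (rule card_mono) (auto simp: finite_path_edges symdiff_def)
      also have "\<dots> \<le> card (path_edges P) + card (path_edges Q)" by (rule card_Un_le)
      finally have sum: "path_length P1 + path_length P2 \<le> path_length P + path_length Q"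
        using c1 c2 cP cQ by simp
      show False using sum lb1 lb2 notboth Qk some(4) assms(8)
        by (auto split: if_splits)
    qed
    then show ?thesis using M'(1) M'G is_matching_mat by blast
  qed
qed

lemma bip_finite_simple:
  assumes "bip_instance Ls R E"
  shows "finite E" "simple E"
proof -
  have "E \<subseteq> (\<lambda>(l,r). {l,r}) ` (set Ls \<times> R)"
    using assms unfolding bip_instance_def by fastforce
  moreover have "finite (set Ls \<times> R)" using assms unfolding bip_instance_def by auto
  ultimately show "finite E" using finite_subset by blast
  show "simple E" unfolding simple_def
  proof
    fix e assume "e \<in> E"
    then obtain l r where "e = {l, r}" "l \<in> set Ls" "r \<in> R"
      using assms unfolding bip_instance_def by blast
    moreover then have "l \<noteq> r" using assms unfolding bip_instance_def by blast
    ultimately show "\<exists>x y. x \<noteq> y \<and> e = {x, y}" by blast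
  qed
qed

lemma revealed_sub: "revealed Ls E i \<subseteq> E"
  unfolding revealed_def by blast

lemma revealed_mono: "revealed Ls E i \<subseteq> revealed Ls E (Suc i)"
  unfolding revealed_def using set_take_subset_set_take[of i "Suc i" Ls] by auto

lemma revealed_new:
  assumes "i < length Ls"
  shows "\<forall>e\<in>revealed Ls E (Suc i) - revealed Ls E i. Ls ! i \<in> e"
  using assms unfolding revealed_def by (auto simp: take_Suc_conv_app_nth)

lemma revealed0: "revealed Ls E 0 = {}"
  unfolding revealed_def by simp

lemma no_aug_empty: "\<not> augmenting_path {} M P"
proof
  assume a: "augmenting_path {} M P"
  then have "length P \<ge> 2" "is_path {} P" unfolding augmenting_path_def by auto
  moreover have "Suc 0 < length P" using \<open>length P \<ge> 2\<close> by simp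
  ultimately have "path_edge P 0 \<in> {}" unfolding is_path_def by blast
  then show False by simp
qed

lemma run_inv:
  assumes "bip_instance Ls R E" "alg_run k Ls E Ms" "k \<ge> 1" "i \<le> length Ls"
  shows "is_matching (revealed Ls E i) (Ms i) \<and>
    (\<forall>P. augmenting_path (revealed Ls E i) (Ms i) P \<longrightarrow> k \<le> path_length P)"
  using assms(4)
proof (induction i)
  case 0
  have "Ms 0 = {}" using assms(2) unfolding alg_run_def by blast
  then show ?case using no_aug_empty revealed0[of Ls E] unfolding is_matching_def by auto
next
  case (Suc i)
  then have i: "i < length Ls" by simp
  have IH: "is_matching (revealed Ls E i) (Ms i)"
    "\<forall>P. augmenting_path (revealed Ls E i) (Ms i) P \<longrightarrow> k \<le> path_length P"
    using Suc by auto
  have st: "alg_step k (revealed Ls E (Suc i)) (Ls ! i) (Ms i) (Ms (Suc i))"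
    using assms(2) i unfolding alg_run_def by blast
  have fs: "finite (revealed Ls E (Suc i))" "simple (revealed Ls E (Suc i))"
    using bip_finite_simple[OF assms(1)] revealed_sub[of Ls E "Suc i"] finite_subset simple_sub by blast+
  show ?case
    by (rule step_inv[OF fs revealed_mono revealed_new[OF i] IH st assms(3)])
qed

lemma OPT_obtain:
  assumes "finite G"
  obtains N where "is_matching G N" "card N = OPT G"
proof -
  let ?S = "{card M | M. is_matching G M}"
  have "?S \<subseteq> card ` Pow G" unfolding is_matching_def by auto
  then have "finite ?S" using assms finite_subset by blast
  moreover have "?S \<noteq> {}" using is_matching_def[of G "{}"] by auto
  ultimately have "OPT G \<in> ?S" unfolding OPT_def by (rule Max_in)
  then show ?thesis using that by auto
qed

theorem theorem1:
  fixes k :: nat and Ls :: "'a list" and R :: "'a set" and E :: "'a set set"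
    and Ms :: "nat \<Rightarrow> 'a set set"
  assumes "even k" and "k \<ge> 2"
    and "bip_instance Ls R E"
    and "alg_run k Ls E Ms"
    and "t \<le> length Ls"
  shows "real (card (Ms t)) \<ge> (1 - 2 / (real k + 2)) * real (OPT (revealed Ls E t))"
proof -
  define G where "G = revealed Ls E t"
  define M where "M = Ms t"
  have inv: "is_matching G M" "\<forall>P. augmenting_path G M P \<longrightarrow> k \<le> path_length P"
    using run_inv[OF assms(3,4) _ assms(5)] assms(2) unfolding G_def M_def by auto
  have fs: "finite G" "simple G"
    using bip_finite_simple[OF assms(3)] revealed_sub[of Ls E t] finite_subset simple_sub
    unfolding G_def by blast+
  obtain N where N: "is_matching G N" "card N = OPT G" using OPT_obtain[OF fs(1)] by blast
  define j where "j = k div 2"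
  have kj: "k = 2 * j" using assms(1) unfolding j_def by simp
  have j1: "j \<ge> 1" using assms(2) kj by simp
  have "j * (card N - card M) \<le> card (M - N)"
    by (rule count_lem[OF fs inv(1) N(1)]) (use inv(2) kj in auto)
  also have "\<dots> \<le> card M"
    using inv(1) fs(1) finite_subset unfolding is_matching_def by (metis card_mono Diff_subset)
  finally have a: "j * (card N - card M) \<le> card M" .
  have b: "j * card N \<le> (j + 1) * card M"
  proof (cases "card N \<le> card M")
    case True
    then have le: "j * card N \<le> j * card M" by (rule mult_le_mono2)
    have "(j + 1) * card M = j * card M + card M" by simp
    then show ?thesis using le by linarith
  next
    case False
    then have "j * (card N - card M) = j * card N - j * card M" by (simp add: diff_mult_distrib2)
    then show ?thesis using a by (simp add: add_mult_distrib) 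
  qed
  have rb: "real j * real (card N) \<le> (real j + 1) * real (card M)"
    using b by (metis of_nat_add of_nat_mult of_nat_1 of_nat_le_iff)
  have "1 - 2 / (real k + 2) = real j / (real j + 1)"
    using kj by (simp add: field_simps)
  then have "(1 - 2 / (real k + 2)) * real (card N) = real j * real (card N) / (real j + 1)"
    by simp
  also have "\<dots> \<le> real (card M)"
    using rb by (simp add: divide_le_eq algebra_simps)
  finally show ?thesis using N(2) unfolding G_def M_def by simp
qed

end
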